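(* Let $k\ge1$, $1\le m\le d$, $p\in[1,\infty]$, and let $v$ be an $\mathbb{R}^k$-valued $m$-vector in $\mathbb{R}^d$. Then \[ |v|_{\mathrm{mass},p}=\inf\Big\{\sum_{i=1}^l\|z_i\|_p\,|v_i|:\ v=\sum_{i=1}^lz_i\otimes v_i,\ z_i\in\mathbb{R}^k,\ v_i\text{ simple }m\text{-vectors in }\mathbb{R}^d\Big\}. \]
   Context: An $\mathbb{R}^k$-valued $m$-vector is $v=\sum_iv_i e_i$ with $v_i\in\Lambda_m(\mathbb{R}^d)$; an $(\mathbb{R}^k)^*$-valued $m$-covector is $w=\sum_iw_ie_i^*$ with $w_i\in\Lambda^m(\mathbb{R}^d)$, paired by $\langle w,v\rangle=\sum_i\langle w_i,v_i\rangle$. With $q$ conjugate to $p$ and $\|\cdot\|_p,\|\cdot\|_q$ the $\ell^p,\ell^q$ norms on $\mathbb{R}^k$: $|w|_{\mathrm{com},p}:=\sup\{\|(\langle w_1,\tau\rangle,\dots,\langle w_k,\tau\rangle)\|_q:\tau\text{ simple }m\text{-vector},|\tau|\le1\}$ and $|v|_{\mathrm{mass},p}:=\sup\{\langle w,v\rangle:|w|_{\mathrm{com},p}\le1\}$. $|\cdot|$ is the Euclidean norm on $\Lambda_m(\mathbb{R}^d)$. *)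

theory Defs
  imports Complex_Main "HOL-Library.Extended_Real" "HOL-Combinatorics.Permutations"
begin

text \<open>An m-vector in R^d is represented by its coefficients w.r.t. the
 orthonormal basis e_I (I an m-element subset of {0..<d}, indices increasing).
 An R^k-valued m-vector is a function v :: nat => nat set => real, v i I being the
 I-th coefficient of the i-th component (i < k). Values outside the index range are ignored.\<close>

definition Idx :: "nat \<Rightarrow> nat \<Rightarrow> nat set set" where
  "Idx d m = {I. I \<subseteq> {..<d} \<and> card I = m}"

text \<open>Coefficients of u 0 \<and> ... \<and> u (m-1): the minors det(u_j(i_r)).\<close>
definition wedge :: "nat \<Rightarrow> (nat \<Rightarrow> nat \<Rightarrow> real) \<Rightarrow> nat set \<Rightarrow> real" where
  "wedge m u I = (\<Sum>\<sigma> | \<sigma> permutes {..<m}.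
      of_int (sign \<sigma>) * (\<Prod>r<m. u (\<sigma> r) (sorted_list_of_set I ! r)))"

definition simple_mvec :: "nat \<Rightarrow> nat \<Rightarrow> (nat set \<Rightarrow> real) \<Rightarrow> bool" where
  "simple_mvec d m \<tau> \<longleftrightarrow>
     (\<exists>u::nat \<Rightarrow> nat \<Rightarrow> real. (\<forall>j<m. \<forall>x. x \<ge> d \<longrightarrow> u j x = 0) \<and>
        (\<forall>I\<in>Idx d m. \<tau> I = wedge m u I))"

definition mnorm :: "nat \<Rightarrow> nat \<Rightarrow> (nat set \<Rightarrow> real) \<Rightarrow> real" where
  "mnorm d m \<tau> = sqrt (\<Sum>I\<in>Idx d m. (\<tau> I)\<^sup>2)"

definition lpnorm :: "ereal \<Rightarrow> nat \<Rightarrow> (nat \<Rightarrow> real) \<Rightarrow> real" where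
  "lpnorm p k z = (if p = \<infinity> then Max ((\<lambda>i. \<bar>z i\<bar>) ` {..<k})
     else (\<Sum>i<k. \<bar>z i\<bar> powr real_of_ereal p) powr (1 / real_of_ereal p))"

definition conj_exp :: "ereal \<Rightarrow> ereal" where
  "conj_exp p = (if p = 1 then \<infinity> else if p = \<infinity> then 1
     else ereal (real_of_ereal p / (real_of_ereal p - 1)))"

definition pairing :: "nat \<Rightarrow> nat \<Rightarrow> nat \<Rightarrow> (nat \<Rightarrow> nat set \<Rightarrow> real) \<Rightarrow> (nat \<Rightarrow> nat set \<Rightarrow> real) \<Rightarrow> real" where
  "pairing k d m w v = (\<Sum>i<k. \<Sum>I\<in>Idx d m. w i I * v i I)"

definition com_norm :: "ereal \<Rightarrow> nat \<Rightarrow> nat \<Rightarrow> nat \<Rightarrow> (nat \<Rightarrow> nat set \<Rightarrow> real) \<Rightarrow> real" where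
  "com_norm p k d m w = Sup {lpnorm (conj_exp p) k (\<lambda>i. \<Sum>I\<in>Idx d m. w i I * \<tau> I) | \<tau>.
      simple_mvec d m \<tau> \<and> mnorm d m \<tau> \<le> 1}"

definition mass_norm :: "ereal \<Rightarrow> nat \<Rightarrow> nat \<Rightarrow> nat \<Rightarrow> (nat \<Rightarrow> nat set \<Rightarrow> real) \<Rightarrow> real" where
  "mass_norm p k d m v = Sup {pairing k d m w v | w. com_norm p k d m w \<le> 1}"

end

theory Submission
  imports Defs "HOL-Library.Function_Algebras" "HOL-Analysis.Convex"
begin

instantiation "fun" :: (type, real_vector) real_vector
begin
definition scaleR_fun :: "real \<Rightarrow> ('a \<Rightarrow> 'b) \<Rightarrow> 'a \<Rightarrow> 'b" where
  "scaleR_fun c f = (\<lambda>x. c *\<^sub>R f x)"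
instance by standard (auto simp: scaleR_fun_def fun_eq_iff algebra_simps)
end

definition sublin :: "('a::real_vector \<Rightarrow> real) \<Rightarrow> bool" where
  "sublin q \<longleftrightarrow> (\<forall>x y. q (x + y) \<le> q x + q y) \<and> (\<forall>c x. 0 \<le> c \<longrightarrow> q (c *\<^sub>R x) = c * q x)"

definition lin_on :: "'a::real_vector set \<Rightarrow> ('a \<Rightarrow> real) \<Rightarrow> bool" where
  "lin_on U f \<longleftrightarrow> (\<forall>x\<in>U. \<forall>y\<in>U. f (x + y) = f x + f y) \<and> (\<forall>c. \<forall>x\<in>U. f (c *\<^sub>R x) = c * f x)"

lemma hb_ext:
  fixes q f :: "'a::real_vector \<Rightarrow> real"
  assumes U: "subspace U" and f: "lin_on U f" and y: "y \<notin> U"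
    and c: "\<And>u t. u \<in> U \<Longrightarrow> f u + t * c \<le> q (u + t *\<^sub>R y)"
  shows "\<exists>g. (\<forall>u\<in>U. g u = f u) \<and> g y = c \<and> lin_on {u + t *\<^sub>R y |u t. u \<in> U} g
     \<and> (\<forall>x\<in>{u + t *\<^sub>R y |u t. u \<in> U}. g x \<le> q x)"
proof -
  have uniq: "u = u' \<and> t = t'" if "u \<in> U" "u' \<in> U" "u + t *\<^sub>R y = u' + t' *\<^sub>R y" for u u' t t'
  proof -
    have e: "(t - t') *\<^sub>R y = u' - u" using that(3) by (simp add: algebra_simps)
    have "t = t'"
    proof (rule ccontr)
      assume "t \<noteq> t'"
      then have "y = (1 / (t - t')) *\<^sub>R (u' - u)" using e
        by (metis divideR_right right_minus_eq scaleR_one eq_vector_fraction_iff)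
      moreover have "(1 / (t - t')) *\<^sub>R (u' - u) \<in> U"
        using U that by (simp add: subspace_scale subspace_diff)
      ultimately show False using y by simp
    qed
    then show ?thesis using that(3) by simp
  qed
  define g where "g x = (let pr = (SOME pr. fst pr \<in> U \<and> x = fst pr + snd pr *\<^sub>R y) in f (fst pr) + snd pr * c)" for x
  have gval: "g (u + t *\<^sub>R y) = f u + t * c" if "u \<in> U" for u t
  proof -
    let ?P = "\<lambda>pr. fst pr \<in> U \<and> u + t *\<^sub>R y = fst pr + snd pr *\<^sub>R y"
    have "?P (u, t)" using that by simp
    then have "?P (SOME pr. ?P pr)" by (rule someI)
    then have "fst (SOME pr. ?P pr) = u \<and> snd (SOME pr. ?P pr) = t"
      using uniq[of u "fst (SOME pr. ?P pr)" t "snd (SOME pr. ?P pr)"] that by auto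
    then show ?thesis unfolding g_def Let_def by simp
  qed
  let ?U' = "{u + t *\<^sub>R y |u t. u \<in> U}"
  show ?thesis
  proof (intro exI conjI ballI)
    show "g u = f u" if "u \<in> U" for u using gval[OF that, of 0] by simp
    show "g y = c" using gval[of 0 1] subspace_0[OF U] f
      by (simp add: lin_on_def) (metis scaleR_zero_left mult_zero_left)
    show "lin_on ?U' g"
      unfolding lin_on_def
    proof (intro conjI ballI allI)
      fix x1 x2 assume "x1 \<in> ?U'" "x2 \<in> ?U'"
      then obtain u1 t1 u2 t2 where h: "u1 \<in> U" "u2 \<in> U" "x1 = u1 + t1 *\<^sub>R y" "x2 = u2 + t2 *\<^sub>R y" by blast
      have "x1 + x2 = (u1 + u2) + (t1 + t2) *\<^sub>R y" using h by (simp add: algebra_simps)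
      then have "g (x1 + x2) = f (u1 + u2) + (t1 + t2) * c" using gval subspace_add[OF U h(1,2)] by simp
      then show "g (x1 + x2) = g x1 + g x2"
        using h gval f by (simp add: lin_on_def algebra_simps)
    next
      fix a x assume "x \<in> ?U'"
      then obtain u t where h: "u \<in> U" "x = u + t *\<^sub>R y" by blast
      have "a *\<^sub>R x = a *\<^sub>R u + (a * t) *\<^sub>R y" using h by (simp add: algebra_simps)
      then have "g (a *\<^sub>R x) = f (a *\<^sub>R u) + (a * t) * c" using gval subspace_scale[OF U h(1)] by simp
      then show "g (a *\<^sub>R x) = a * g x"
        using h gval f by (simp add: lin_on_def algebra_simps)
    qed
    show "g x \<le> q x" if "x \<in> ?U'" for x
      using that gval c by auto
  qed
qed

lemma hb_c:
  fixes q f :: "'a::real_vector \<Rightarrow> real"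
  assumes q: "sublin q" and U: "subspace U" and f: "lin_on U f" and fq: "\<And>u. u \<in> U \<Longrightarrow> f u \<le> q u"
  shows "\<exists>c. \<forall>u\<in>U. \<forall>t. f u + t * c \<le> q (u + t *\<^sub>R y)"
proof -
  have qadd: "q (a + b) \<le> q a + q b" for a b using q by (simp add: sublin_def)
  have qhom: "q (s *\<^sub>R a) = s * q a" if "0 \<le> s" for s a using q that by (simp add: sublin_def)
  have fadd: "f (a + b) = f a + f b" if "a \<in> U" "b \<in> U" for a b using f that by (simp add: lin_on_def)
  have fhom: "f (s *\<^sub>R a) = s * f a" if "a \<in> U" for s a using f that by (simp add: lin_on_def)
  have key: "f u - q (u - y) \<le> q (u' + y) - f u'" if "u \<in> U" "u' \<in> U" for u u'
  proof -
    have "f u + f u' = f (u + u')" using fadd that by simp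
    also have "\<dots> \<le> q (u + u')" using fq subspace_add[OF U that] by simp
    also have "u + u' = (u - y) + (u' + y)" by simp
    finally show ?thesis using qadd[of "u - y" "u' + y"] by simp
  qed
  define A where "A = {f u - q (u - y) |u. u \<in> U}"
  define c where "c = Sup A"
  have A0: "A \<noteq> {}" using subspace_0[OF U] by (auto simp: A_def)
  have bdd: "bdd_above A" unfolding A_def bdd_above_def
    using key[OF _ subspace_0[OF U]] by blast
  have c1: "f u - q (u - y) \<le> c" if "u \<in> U" for u
    unfolding c_def by (rule cSup_upper[OF _ bdd]) (use that in \<open>auto simp: A_def\<close>)
  have c2: "c \<le> q (u + y) - f u" if "u \<in> U" for u
    unfolding c_def by (rule cSup_least[OF A0]) (use key that in \<open>auto simp: A_def\<close>)
  show ?thesis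
  proof (intro exI ballI allI)
    fix u and t :: real assume u: "u \<in> U"
    consider "t = 0" | "t > 0" | "t < 0" by linarith
    then show "f u + t * c \<le> q (u + t *\<^sub>R y)"
    proof cases
      case 1 then show ?thesis using fq u by simp
    next
      case 2
      have uu: "(1/t) *\<^sub>R u \<in> U" using U u by (simp add: subspace_scale)
      have "c \<le> q ((1/t) *\<^sub>R u + y) - f ((1/t) *\<^sub>R u)" using c2[OF uu] .
      also have "(1/t) *\<^sub>R u + y = (1/t) *\<^sub>R (u + t *\<^sub>R y)" using 2 by (simp add: algebra_simps)
      finally have "c \<le> (1/t) * q (u + t *\<^sub>R y) - (1/t) * f u"
        using qhom[of "1/t"] fhom[OF u] 2 by simp
      then have "t * c \<le> t * ((1/t) * q (u + t *\<^sub>R y) - (1/t) * f u)"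
        using 2 by (simp add: mult_left_mono)
      then show ?thesis using 2 by (simp add: algebra_simps)
    next
      case 3
      define s where "s = - t"
      have s: "s > 0" using 3 by (simp add: s_def)
      have uu: "(1/s) *\<^sub>R u \<in> U" using U u by (simp add: subspace_scale)
      have "f ((1/s) *\<^sub>R u) - q ((1/s) *\<^sub>R u - y) \<le> c" using c1[OF uu] .
      also have "(1/s) *\<^sub>R u - y = (1/s) *\<^sub>R (u + t *\<^sub>R y)" using s by (simp add: s_def algebra_simps)
      finally have "(1/s) * f u - (1/s) * q (u + t *\<^sub>R y) \<le> c"
        using qhom[of "1/s"] fhom[OF u] s by simp
      then have "s * ((1/s) * f u - (1/s) * q (u + t *\<^sub>R y)) \<le> s * c"
        using s by (simp add: mult_left_mono)
      then show ?thesis using s by (simp add: algebra_simps s_def)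
    qed
  qed
qed

lemma subspace_sum_span:
  fixes U :: "'a::real_vector set"
  assumes "subspace U"
  shows "subspace {u + s |u s. u \<in> U \<and> s \<in> span B}"
  unfolding subspace_def
proof (intro conjI ballI allI)
  have "(0::'a) = 0 + 0 \<and> (0::'a) \<in> U \<and> (0::'a) \<in> span B" using subspace_0[OF assms] span_zero by simp
  then show "0 \<in> {u + s |u s. u \<in> U \<and> s \<in> span B}" by blast
next
  fix x y assume "x \<in> {u + s |u s. u \<in> U \<and> s \<in> span B}" "y \<in> {u + s |u s. u \<in> U \<and> s \<in> span B}"
  then obtain u1 s1 u2 s2 where h: "u1 \<in> U" "s1 \<in> span B" "u2 \<in> U" "s2 \<in> span B" "x = u1 + s1" "y = u2 + s2" by blast
  then have "x + y = (u1 + u2) + (s1 + s2)" by (simp add: algebra_simps)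
  moreover have "u1 + u2 \<in> U" using subspace_add[OF assms h(1,3)] .
  moreover have "s1 + s2 \<in> span B" using span_add[OF h(2,4)] .
  ultimately show "x + y \<in> {u + s |u s. u \<in> U \<and> s \<in> span B}" by blast
next
  fix c x assume "x \<in> {u + s |u s. u \<in> U \<and> s \<in> span B}"
  then obtain u1 s1 where h: "u1 \<in> U" "s1 \<in> span B" "x = u1 + s1" by blast
  then have "c *\<^sub>R x = c *\<^sub>R u1 + c *\<^sub>R s1" by (simp add: algebra_simps)
  moreover have "c *\<^sub>R u1 \<in> U" using subspace_scale[OF assms h(1)] .
  moreover have "c *\<^sub>R s1 \<in> span B" using span_scale[OF h(2)] .
  ultimately show "c *\<^sub>R x \<in> {u + s |u s. u \<in> U \<and> s \<in> span B}" by blast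
qed

lemma lin_on_mono: "lin_on W g \<Longrightarrow> V \<subseteq> W \<Longrightarrow> lin_on V g"
  unfolding lin_on_def by blast

lemma hb_fin:
  fixes q f :: "'a::real_vector \<Rightarrow> real"
  assumes q: "sublin q" and U: "subspace U" and f: "lin_on U f" and fq: "\<And>u. u \<in> U \<Longrightarrow> f u \<le> q u"
    and B: "finite B"
  shows "\<exists>g. (\<forall>u\<in>U. g u = f u) \<and> lin_on {u + s |u s. u \<in> U \<and> s \<in> span B} g
     \<and> (\<forall>x\<in>{u + s |u s. u \<in> U \<and> s \<in> span B}. g x \<le> q x)"
  using B
proof (induction B rule: finite_induct)
  case empty
  have e: "{u + s |u s. u \<in> U \<and> s \<in> span {}} = U"
  proof (intro equalityI subsetI)
    fix x assume "x \<in> {u + s |u s. u \<in> U \<and> s \<in> span {}}"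
    then obtain u s where "u \<in> U" "s \<in> span {}" "x = u + s" by blast
    then show "x \<in> U" by simp
  next
    fix x assume "x \<in> U"
    then have "x = x + 0 \<and> x \<in> U \<and> (0::'a) \<in> span {}" by (simp add: span_zero)
    then show "x \<in> {u + s |u s. u \<in> U \<and> s \<in> span {}}" by blast
  qed
  show ?case unfolding e
  proof (intro exI[of _ f] conjI ballI)
    show "lin_on U f" by (rule f)
  qed (use fq in auto)
next
  case (insert b B)
  let ?W = "{u + s |u s. u \<in> U \<and> s \<in> span B}"
  let ?W2 = "{u + s |u s. u \<in> U \<and> s \<in> span (insert b B)}"
  obtain g1 where g1: "\<forall>u\<in>U. g1 u = f u" "lin_on ?W g1" "\<forall>x\<in>?W. g1 x \<le> q x"
    using insert.IH by blast
  have W: "subspace ?W" by (rule subspace_sum_span[OF U])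
  have sub: "?W2 \<subseteq> {x + t *\<^sub>R b |x t. x \<in> ?W}"
  proof
    fix x assume "x \<in> ?W2"
    then obtain u s where h: "u \<in> U" "s \<in> span (insert b B)" "x = u + s" by blast
    then obtain t where t: "s - t *\<^sub>R b \<in> span B" using span_breakdown_eq by blast
    have "x = (u + (s - t *\<^sub>R b)) + t *\<^sub>R b" using h by simp
    moreover have "u + (s - t *\<^sub>R b) \<in> ?W" using h(1) t by blast
    ultimately show "x \<in> {x + t *\<^sub>R b |x t. x \<in> ?W}" by blast
  qed
  show ?case
  proof (cases "b \<in> ?W")
    case True
    have "{x + t *\<^sub>R b |x t. x \<in> ?W} \<subseteq> ?W"
    proof
      fix x assume "x \<in> {x + t *\<^sub>R b |x t. x \<in> ?W}"
      then obtain y t where yt: "y \<in> ?W" "x = y + t *\<^sub>R b" by blast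
      then show "x \<in> ?W" using subspace_add[OF W yt(1) subspace_scale[OF W True]] by simp
    qed
    with sub have WW: "?W2 \<subseteq> ?W" by (rule subset_trans)
    show ?thesis
    proof (intro exI[of _ g1] conjI)
      show "lin_on ?W2 g1" by (rule lin_on_mono[OF g1(2) WW])
      show "\<forall>x\<in>?W2. g1 x \<le> q x" using g1(3) WW by (meson subsetD)
    qed (use g1(1) in simp)
  next
    case False
    have g1q: "\<And>u. u \<in> ?W \<Longrightarrow> g1 u \<le> q u" using g1(3) by blast
    from hb_c[OF q W g1(2) g1q, of b] obtain c where c: "\<forall>u\<in>?W. \<forall>t. g1 u + t * c \<le> q (u + t *\<^sub>R b)"
      by blast
    have c': "\<And>u t. u \<in> ?W \<Longrightarrow> g1 u + t * c \<le> q (u + t *\<^sub>R b)" using c by blast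
    from hb_ext[OF W g1(2) False c'] obtain g where g: "\<forall>u\<in>?W. g u = g1 u" "g b = c"
       "lin_on {u + t *\<^sub>R b |u t. u \<in> ?W} g"
       "\<forall>x\<in>{u + t *\<^sub>R b |u t. u \<in> ?W}. g x \<le> q x"
      by blast
    have UW: "U \<subseteq> ?W"
    proof
      fix u assume u: "u \<in> U"
      show "u \<in> ?W" unfolding mem_Collect_eq
        by (intro exI[of _ u] exI[of _ "0::'a"]) (simp add: span_zero u)
    qed
    show ?thesis
    proof (intro exI[of _ g] conjI ballI)
      show "lin_on ?W2 g" by (rule lin_on_mono[OF g(3) sub])
    next
      fix x assume "x \<in> ?W2"
      then have "x \<in> {u + t *\<^sub>R b |u t. u \<in> ?W}" by (rule subsetD[OF sub])
      then show "g x \<le> q x" by (rule bspec[OF g(4)])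
    next
      fix u assume u: "u \<in> U"
      then have "u \<in> ?W" by (rule subsetD[OF UW])
      then have "g u = g1 u" by (rule bspec[OF g(1)])
      also have "g1 u = f u" using u by (rule bspec[OF g1(1)])
      finally show "g u = f u" .
    qed
  qed
qed

lemma p_cases:
  assumes "1 \<le> (p::ereal)"
  obtains "p = \<infinity>" | "p = 1" | r where "p = ereal r" "r > 1"
  using assms by (cases p) (auto simp: le_less)

lemma lp_inf: "lpnorm \<infinity> k z = Max ((\<lambda>i. \<bar>z i\<bar>) ` {..<k})"
  by (simp add: lpnorm_def)

lemma lp_one: "lpnorm 1 k z = (\<Sum>i<k. \<bar>z i\<bar>)"
  by (simp add: lpnorm_def sum_nonneg)

lemma lp_r: "lpnorm (ereal r) k z = (\<Sum>i<k. \<bar>z i\<bar> powr r) powr (1 / r)"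
  by (simp add: lpnorm_def)

lemma conj_inf: "conj_exp \<infinity> = 1" by (simp add: conj_exp_def)
lemma conj_one: "conj_exp 1 = \<infinity>" by (simp add: conj_exp_def)
lemma conj_r: "r > 1 \<Longrightarrow> conj_exp (ereal r) = ereal (r / (r - 1))"
  by (simp add: conj_exp_def)

lemma lp_nonneg: "0 < k \<Longrightarrow> 0 \<le> lpnorm p k z"
proof (cases "p = \<infinity>")
  case True
  assume "0 < k"
  then have "\<bar>z 0\<bar> \<le> Max ((\<lambda>i. \<bar>z i\<bar>) ` {..<k})" by (intro Max_ge) auto
  then show ?thesis using True by (simp add: lpnorm_def)
next
  case False
  then show ?thesis by (simp add: lpnorm_def)
qed

lemma holder_r:
  fixes z a :: "nat \<Rightarrow> real"
  assumes r: "r > 1" and s: "s = r / (r - 1)"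
  shows "(\<Sum>i<k. z i * a i) \<le> (\<Sum>i<k. \<bar>z i\<bar> powr r) powr (1/r) * (\<Sum>i<k. \<bar>a i\<bar> powr s) powr (1/s)"
proof -
  define A where "A = (\<Sum>i<k. \<bar>z i\<bar> powr r) powr (1/r)"
  define B where "B = (\<Sum>i<k. \<bar>a i\<bar> powr s) powr (1/s)"
  have s1: "s > 1" using r s by (simp add: less_divide_eq)
  have "1/s = (r - 1)/r" using r s by simp
  then have rs: "1/r + 1/s = 1" using r by (simp add: diff_divide_distrib)
  have A0: "A \<ge> 0" "B \<ge> 0" by (simp_all add: A_def B_def)
  have "(\<Sum>i<k. z i * a i) \<le> (\<Sum>i<k. \<bar>z i\<bar> * \<bar>a i\<bar>)"
    by (intro sum_mono) (simp add: abs_mult[symmetric])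
  also have "\<dots> \<le> A * B"
  proof (cases "A = 0 \<or> B = 0")
    case True
    then show ?thesis
    proof
      assume "A = 0"
      then have "(\<Sum>i<k. \<bar>z i\<bar> powr r) = 0" by (simp add: A_def)
      then have "\<forall>i\<in>{..<k}. \<bar>z i\<bar> powr r = 0" by (subst (asm) sum_nonneg_eq_0_iff) auto
      then show ?thesis using A0 by simp
    next
      assume "B = 0"
      then have "(\<Sum>i<k. \<bar>a i\<bar> powr s) = 0" by (simp add: B_def)
      then have "\<forall>i\<in>{..<k}. \<bar>a i\<bar> powr s = 0" by (subst (asm) sum_nonneg_eq_0_iff) auto
      then show ?thesis using A0 by simp
    qed
  next
    case False
    then have Ap: "A > 0" "B > 0" using A0 by auto
    have Ar: "A powr r = (\<Sum>i<k. \<bar>z i\<bar> powr r)" using r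
      by (simp add: A_def powr_powr sum_nonneg)
    have Bs: "B powr s = (\<Sum>i<k. \<bar>a i\<bar> powr s)" using s1
      by (simp add: B_def powr_powr sum_nonneg)
    have "(\<Sum>i<k. (\<bar>z i\<bar> / A) * (\<bar>a i\<bar> / B)) \<le>
          (\<Sum>i<k. (\<bar>z i\<bar> / A) powr r / r + (\<bar>a i\<bar> / B) powr s / s)"
    proof (rule sum_mono)
      fix i
      have "0 \<le> \<bar>z i\<bar> / A" "0 \<le> \<bar>a i\<bar> / B" using Ap by simp_all
      then show "(\<bar>z i\<bar> / A) * (\<bar>a i\<bar> / B) \<le> (\<bar>z i\<bar> / A) powr r / r + (\<bar>a i\<bar> / B) powr s / s"
        using Youngs_inequality[OF r s1 rs] by blast
    qed
    also have "\<dots> = (\<Sum>i<k. \<bar>z i\<bar> powr r) / A powr r / r + (\<Sum>i<k. \<bar>a i\<bar> powr s) / B powr s / s"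
    proof -
      have e1: "(\<bar>z i\<bar> / A) powr r / r = \<bar>z i\<bar> powr r / A powr r / r" for i
        using Ap by (simp add: powr_divide)
      have e2: "(\<bar>a i\<bar> / B) powr s / s = \<bar>a i\<bar> powr s / B powr s / s" for i
        using Ap by (simp add: powr_divide)
      show ?thesis by (simp only: e1 e2 sum.distrib sum_divide_distrib)
    qed
    also have "\<dots> = 1/r + 1/s"
    proof -
      have "0 < A powr r" "0 < B powr s" using Ap by simp_all
      then have "0 < (\<Sum>i<k. \<bar>z i\<bar> powr r)" "0 < (\<Sum>i<k. \<bar>a i\<bar> powr s)" by (simp_all only: Ar Bs)
      then show ?thesis using r s1 by (simp add: Ar Bs)
    qed
    finally have le: "(\<Sum>i<k. (\<bar>z i\<bar> / A) * (\<bar>a i\<bar> / B)) \<le> 1" using rs by linarith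
    have "(\<Sum>i<k. (\<bar>z i\<bar> / A) * (\<bar>a i\<bar> / B)) = (\<Sum>i<k. \<bar>z i\<bar> * \<bar>a i\<bar>) / (A * B)"
      unfolding sum_divide_distrib by (rule sum.cong) auto
    with le have "(\<Sum>i<k. \<bar>z i\<bar> * \<bar>a i\<bar>) / (A * B) \<le> 1" by simp
    then show ?thesis using Ap by (simp add: divide_le_eq)
  qed
  finally show ?thesis by (simp add: A_def B_def)
qed

lemma Max_abs_ge: "(i::nat) < k \<Longrightarrow> \<bar>z i\<bar> \<le> Max ((\<lambda>i. \<bar>z i\<bar>) ` {..<k})"
  by (rule Max_ge) simp_all

lemma holder:
  fixes z a :: "nat \<Rightarrow> real"
  assumes p: "1 \<le> p" and k: "0 < k"
  shows "(\<Sum>i<k. z i * a i) \<le> lpnorm p k z * lpnorm (conj_exp p) k a"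
  using p
proof (cases rule: p_cases)
  case 1
  define M where "M = Max ((\<lambda>i. \<bar>z i\<bar>) ` {..<k})"
  have "(\<Sum>i<k. z i * a i) \<le> (\<Sum>i<k. M * \<bar>a i\<bar>)"
  proof (rule sum_mono)
    fix i assume "i \<in> {..<k}"
    then have "\<bar>z i\<bar> \<le> M" unfolding M_def by (intro Max_abs_ge) auto
    then have "\<bar>z i\<bar> * \<bar>a i\<bar> \<le> M * \<bar>a i\<bar>" by (simp add: mult_right_mono)
    moreover have "z i * a i \<le> \<bar>z i\<bar> * \<bar>a i\<bar>" by (simp add: abs_mult[symmetric])
    ultimately show "z i * a i \<le> M * \<bar>a i\<bar>" by linarith
  qed
  also have "\<dots> = lpnorm p k z * lpnorm (conj_exp p) k a"
    using 1 by (simp add: lp_inf conj_inf lp_one M_def sum_distrib_left)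
  finally show ?thesis .
next
  case 2
  define M where "M = Max ((\<lambda>i. \<bar>a i\<bar>) ` {..<k})"
  have "(\<Sum>i<k. z i * a i) \<le> (\<Sum>i<k. \<bar>z i\<bar> * M)"
  proof (rule sum_mono)
    fix i assume "i \<in> {..<k}"
    then have "\<bar>a i\<bar> \<le> M" unfolding M_def by (intro Max_abs_ge) auto
    then have "\<bar>z i\<bar> * \<bar>a i\<bar> \<le> \<bar>z i\<bar> * M" by (simp add: mult_left_mono)
    moreover have "z i * a i \<le> \<bar>z i\<bar> * \<bar>a i\<bar>" by (simp add: abs_mult[symmetric])
    ultimately show "z i * a i \<le> \<bar>z i\<bar> * M" by linarith
  qed
  also have "\<dots> = lpnorm p k z * lpnorm (conj_exp p) k a"
    using 2 by (simp add: lp_inf conj_one lp_one M_def sum_distrib_right)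
  finally show ?thesis .
next
  case (3 r)
  then show ?thesis using holder_r[where r=r and s="r/(r-1)" and k=k and z=z and a=a]
    by (simp add: lp_r conj_r)
qed

lemma sgn_times_self: "sgn (x::real) * x = \<bar>x\<bar>"
  by (simp add: sgn_if)

lemma dual_attain:
  fixes a :: "nat \<Rightarrow> real"
  assumes p: "1 \<le> p" and k: "0 < k"
    and H: "\<And>z. (\<Sum>i<k. z i * a i) \<le> lpnorm p k z"
  shows "lpnorm (conj_exp p) k a \<le> 1"
  using p
proof (cases rule: p_cases)
  case 1
  have "(\<Sum>i<k. sgn (a i) * a i) \<le> lpnorm p k (\<lambda>i. sgn (a i))" by (rule H)
  also have "\<dots> \<le> 1" unfolding 1 lp_inf
    using k by (intro Max.boundedI) (auto simp: abs_sgn_eq)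
  finally show ?thesis using 1 by (simp add: conj_inf lp_one sgn_times_self)
next
  case 2
  have fin: "finite ((\<lambda>i. \<bar>a i\<bar>) ` {..<k})" "(\<lambda>i. \<bar>a i\<bar>) ` {..<k} \<noteq> {}" using k by auto
  obtain i0 where i0: "i0 < k" "Max ((\<lambda>i. \<bar>a i\<bar>) ` {..<k}) = \<bar>a i0\<bar>"
    using Max_in[OF fin] by auto
  define z where "z i = (if i = i0 then sgn (a i0) else 0)" for i
  have "(\<Sum>i<k. z i * a i) = (\<Sum>i<k. if i = i0 then sgn (a i0) * a i0 else 0)"
    by (rule sum.cong) (auto simp: z_def)
  also have "\<dots> = \<bar>a i0\<bar>" using i0 by (simp add: sgn_times_self)
  finally have e1: "(\<Sum>i<k. z i * a i) = \<bar>a i0\<bar>" .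
  have "(\<Sum>i<k. \<bar>z i\<bar>) = (\<Sum>i<k. if i = i0 then \<bar>sgn (a i0)\<bar> else 0)"
    by (rule sum.cong) (auto simp: z_def)
  also have "\<dots> \<le> 1" using i0 by (simp add: abs_sgn_eq)
  finally have e2: "lpnorm p k z \<le> 1" using 2 by (simp add: lp_one)
  show ?thesis using H[of z] e1 e2 i0 2 by (simp add: conj_one lp_inf)
next
  case (3 r)
  define s where "s = r / (r - 1)"
  have s1: "s > 1" using 3 by (simp add: s_def less_divide_eq)
  have sr: "(s - 1) * r = s" using 3 by (simp add: s_def field_simps)
  define S where "S = (\<Sum>i<k. \<bar>a i\<bar> powr s)"
  have S0: "S \<ge> 0" by (simp add: S_def sum_nonneg)
  have goal: "lpnorm (conj_exp p) k a = S powr (1/s)" using 3 by (simp add: conj_r lp_r S_def s_def)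
  show ?thesis
  proof (cases "S = 0")
    case True then show ?thesis using goal by simp
  next
    case False
    then have Sp: "S > 0" using S0 by simp
    define z where "z i = sgn (a i) * \<bar>a i\<bar> powr (s - 1)" for i
    have za: "z i * a i = \<bar>a i\<bar> powr s" for i
    proof (cases "a i = 0")
      case False
      then have "z i * a i = \<bar>a i\<bar> * \<bar>a i\<bar> powr (s - 1)"
        by (simp add: z_def sgn_if)
      also have "\<dots> = \<bar>a i\<bar> powr (1 + (s - 1))" using False by (simp add: powr_mult_base)
      finally show ?thesis by simp
    qed (use s1 in \<open>simp add: z_def\<close>)
    have zr: "\<bar>z i\<bar> powr r = \<bar>a i\<bar> powr s" for i
    proof -
      have "\<bar>z i\<bar> = \<bar>a i\<bar> powr (s - 1) \<or> a i = 0" by (auto simp: z_def sgn_if abs_mult)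
      then show ?thesis
      proof
        assume "\<bar>z i\<bar> = \<bar>a i\<bar> powr (s - 1)"
        then show ?thesis using sr by (simp add: powr_powr)
      qed (use 3 s1 in \<open>simp add: z_def\<close>)
    qed
    have "S = (\<Sum>i<k. z i * a i)" by (simp add: S_def za)
    also have "\<dots> \<le> lpnorm p k z" by (rule H)
    also have "\<dots> = S powr (1 / r)" using 3 by (simp add: lp_r zr S_def)
    finally have SS: "S \<le> S powr (1/r)" .
    have "S \<le> 1"
    proof (rule ccontr)
      assume "\<not> S \<le> 1"
      then have "S powr (1/r) < S powr 1" using 3 by (intro powr_less_mono) auto
      then show False using SS Sp by simp
    qed
    then have "S powr (1/s) \<le> 1 powr (1/s)" using Sp s1 by (intro powr_mono2) auto
    then have "S powr (1/s) \<le> 1" by simp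
    then show ?thesis using goal by simp
  qed
qed

lemma conj_cases:
  assumes "1 \<le> p" shows "conj_exp p = \<infinity> \<or> (\<exists>s\<ge>1. conj_exp p = ereal s)"
  using assms
proof (cases rule: p_cases)
  case 1 then show ?thesis by (simp add: conj_inf one_ereal_def)
next
  case 2 then show ?thesis by (simp add: conj_one)
next
  case (3 r)
  then have "r / (r - 1) \<ge> 1" by (simp add: le_divide_eq)
  then show ?thesis using 3 by (simp add: conj_r)
qed

lemma lp_bound:
  fixes a :: "nat \<Rightarrow> real"
  assumes r: "r = \<infinity> \<or> (\<exists>s\<ge>1. r = ereal s)" and k: "0 < k" and B: "\<And>i. i < k \<Longrightarrow> \<bar>a i\<bar> \<le> Bd"
  shows "lpnorm r k a \<le> real k * Bd"
proof -
  have Bd0: "0 \<le> Bd" using B[OF k] by linarith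
  have kBd: "Bd \<le> real k * Bd" using k Bd0 by (simp add: mult_le_cancel_right1)
  show ?thesis using r
  proof
    assume "r = \<infinity>"
    then have e: "lpnorm r k a = Max ((\<lambda>i. \<bar>a i\<bar>) ` {..<k})" by (simp add: lp_inf)
    have "Max ((\<lambda>i. \<bar>a i\<bar>) ` {..<k}) \<le> Bd" using k B by (intro Max.boundedI) auto
    then have "lpnorm r k a \<le> Bd" using e by simp
    then show ?thesis using kBd by linarith
  next
    assume "\<exists>s\<ge>1. r = ereal s"
    then obtain s where s: "s \<ge> 1" "r = ereal s" by blast
    have "(\<Sum>i<k. \<bar>a i\<bar> powr s) \<le> (\<Sum>i<k. Bd powr s)"
      using B s by (intro sum_mono powr_mono2) auto
    also have "\<dots> = real k * Bd powr s" by simp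
    finally have "(\<Sum>i<k. \<bar>a i\<bar> powr s) powr (1/s) \<le> (real k * Bd powr s) powr (1/s)"
      using s by (intro powr_mono2) (auto simp: sum_nonneg)
    also have "\<dots> = real k powr (1/s) * Bd" using s Bd0 by (simp add: powr_mult powr_powr)
    also have "\<dots> \<le> real k powr 1 * Bd" using s k Bd0
      by (intro mult_right_mono powr_mono) auto
    finally show ?thesis using s by (simp add: lp_r)
  qed
qed

lemma scaleR_fun_apply2 [simp]: "(c *\<^sub>R (x :: nat \<Rightarrow> nat set \<Rightarrow> real)) i I = c * x i I"
  by (simp add: scaleR_fun_def)

lemma finite_Idx: "finite (Idx d m)"
  by (rule finite_subset[of _ "Pow {..<d}"]) (auto simp: Idx_def)

lemma sum_concat: "(\<Sum>j<l1 + l2. f j) = (\<Sum>j<l1. f j) + (\<Sum>j<l2. f (l1 + j)) "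
  for f :: "nat \<Rightarrow> real"
  by (induction l2) (simp_all add: add.assoc)

lemma wedge_scale:
  assumes m: "1 \<le> m"
  shows "wedge m (u(0 := (\<lambda>x. c * u 0 x))) I = c * wedge m u I"
  unfolding wedge_def sum_distrib_left
proof (rule sum.cong[OF refl])
  fix \<sigma> assume "\<sigma> \<in> {\<sigma>. \<sigma> permutes {..<m}}"
  then have \<sigma>: "\<sigma> permutes {..<m}" by simp
  let ?L = "sorted_list_of_set I"
  have "(\<Prod>r<m. (u(0 := (\<lambda>x. c * u 0 x))) (\<sigma> r) (?L ! r))
      = (\<Prod>r<m. (if r = inv \<sigma> 0 then c else 1) * u (\<sigma> r) (?L ! r))"
  proof (rule prod.cong[OF refl])
    fix r assume "r \<in> {..<m}"
    have "(r = inv \<sigma> 0) = (\<sigma> r = 0)" using permutes_inv_eq[OF \<sigma>] by metis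
    then show "(u(0 := (\<lambda>x. c * u 0 x))) (\<sigma> r) (?L ! r) = (if r = inv \<sigma> 0 then c else 1) * u (\<sigma> r) (?L ! r)"
      by auto
  qed
  also have "\<dots> = (\<Prod>r<m. (if r = inv \<sigma> 0 then c else 1)) * (\<Prod>r<m. u (\<sigma> r) (?L ! r))"
    by (rule prod.distrib)
  also have "(\<Prod>r<m. (if r = inv \<sigma> 0 then c else 1)) = c"
  proof -
    have "inv \<sigma> 0 \<in> {..<m}" using permutes_in_image[OF permutes_inv[OF \<sigma>]] m by simp
    then show ?thesis by (simp add: prod.delta)
  qed
  finally show "of_int (sign \<sigma>) * (\<Prod>r<m. (u(0 := (\<lambda>x. c * u 0 x))) (\<sigma> r) (?L ! r))
      = c * (of_int (sign \<sigma>) * (\<Prod>r<m. u (\<sigma> r) (?L ! r)))" by simp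
qed

lemma simple_scale:
  assumes m: "1 \<le> m" and s: "simple_mvec d m \<tau>"
  shows "simple_mvec d m (\<lambda>I. c * \<tau> I)"
proof -
  obtain u where u: "\<forall>j<m. \<forall>x. x \<ge> d \<longrightarrow> u j x = 0" "\<forall>I\<in>Idx d m. \<tau> I = wedge m u I"
    using s by (auto simp: simple_mvec_def)
  show ?thesis unfolding simple_mvec_def
  proof (intro exI[of _ "u(0 := (\<lambda>x. c * u 0 x))"] conjI allI impI ballI)
    fix j x assume "j < m" "d \<le> x"
    then show "(u(0 := (\<lambda>x. c * u 0 x))) j x = 0" using u(1) by auto
  next
    fix I assume "I \<in> Idx d m"
    then show "c * \<tau> I = wedge m (u(0 := (\<lambda>x. c * u 0 x))) I"
      using u(2) wedge_scale[OF m] by simp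
  qed
qed

lemma mnorm_scale: "mnorm d m (\<lambda>I. c * \<tau> I) = \<bar>c\<bar> * mnorm d m \<tau>"
proof -
  have "(\<Sum>I\<in>Idx d m. (c * \<tau> I)\<^sup>2) = c\<^sup>2 * (\<Sum>I\<in>Idx d m. (\<tau> I)\<^sup>2)"
    by (simp add: power_mult_distrib sum_distrib_left)
  then show ?thesis by (simp add: mnorm_def real_sqrt_mult)
qed

lemma mnorm_nonneg: "0 \<le> mnorm d m \<tau>"
  by (simp add: mnorm_def sum_nonneg)

lemma mnorm_ge: "I \<in> Idx d m \<Longrightarrow> \<bar>\<tau> I\<bar> \<le> mnorm d m \<tau>"
proof -
  assume I: "I \<in> Idx d m"
  have "(\<tau> I)\<^sup>2 \<le> (\<Sum>J\<in>Idx d m. (\<tau> J)\<^sup>2)"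
    by (rule member_le_sum[OF I]) (simp_all add: finite_Idx)
  then have "sqrt ((\<tau> I)\<^sup>2) \<le> mnorm d m \<tau>" unfolding mnorm_def by (rule real_sqrt_le_mono)
  then show ?thesis by simp
qed

lemma simple_basis:
  assumes I: "I \<in> Idx d m"
  shows "simple_mvec d m (\<lambda>J. if J = I then 1 else 0)"
proof -
  let ?L = "sorted_list_of_set I"
  have finI: "finite I" and Isub: "I \<subseteq> {..<d}" and cI: "card I = m"
    using I by (auto simp: Idx_def intro: finite_subset)
  have lenL: "length ?L = m" using cI by simp
  have distL: "distinct ?L" by simp
  have setL: "set ?L = I" using finI by simp
  define u where "u r x = (if x = ?L ! r then 1 else 0 :: real)" for r x
  show ?thesis unfolding simple_mvec_def
  proof (intro exI[of _ u] conjI allI impI ballI)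
    fix j x assume j: "j < m" and x: "d \<le> x"
    have "?L ! j \<in> I" using j lenL setL nth_mem by metis
    then have "?L ! j < d" using Isub by auto
    then show "u j x = 0" using x by (auto simp: u_def)
  next
    fix J assume J: "J \<in> Idx d m"
    let ?M = "sorted_list_of_set J"
    have finJ: "finite J" and cJ: "card J = m" using J by (auto simp: Idx_def intro: finite_subset)
    have lenM: "length ?M = m" using cJ by simp
    have setM: "set ?M = J" using finJ by simp
    show "(if J = I then 1 else 0) = wedge m u J"
    proof (cases "J = I")
      case True
      have "wedge m u J = (\<Sum>\<sigma> | \<sigma> permutes {..<m}. (if \<sigma> = id then 1 else 0))"
        unfolding wedge_def
      proof (rule sum.cong[OF refl])
        fix \<sigma> assume "\<sigma> \<in> {\<sigma>. \<sigma> permutes {..<m}}"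
        then have \<sigma>: "\<sigma> permutes {..<m}" by simp
        show "of_int (sign \<sigma>) * (\<Prod>r<m. u (\<sigma> r) (?M ! r)) = (if \<sigma> = id then 1 else 0)"
        proof (cases "\<sigma> = id")
          case True
          then show ?thesis using \<open>J = I\<close> by (simp add: u_def sign_id)
        next
          case False
          then obtain r where r: "\<sigma> r \<noteq> r" by (metis eq_id_iff)
          then have rm: "r < m" using \<sigma> unfolding permutes_def by auto
          have srm: "\<sigma> r < m" using permutes_in_image[OF \<sigma>] rm by simp
          have "?L ! (\<sigma> r) \<noteq> ?L ! r" using nth_eq_iff_index_eq[OF distL] lenL rm srm r by simp
          then have "u (\<sigma> r) (?M ! r) = 0" using \<open>J = I\<close> by (simp add: u_def)
          then have "(\<Prod>r<m. u (\<sigma> r) (?M ! r)) = 0" using rm by (intro prod_zero) auto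
          then show ?thesis using False by simp
        qed
      qed
      also have "\<dots> = 1" using permutes_id[of "{..<m}"] finite_permutations[of "{..<m}"]
        by (simp add: sum.delta')
      finally show ?thesis using True by simp
    next
      case False
      have "\<not> J \<subseteq> I"
      proof
        assume "J \<subseteq> I"
        then have "J = I" using card_subset_eq[OF finI] cI cJ by simp
        then show False using False by simp
      qed
      then obtain x where x: "x \<in> J" "x \<notin> I" by blast
      then obtain r where r: "r < m" "?M ! r = x" using setM lenM by (metis in_set_conv_nth)
      have "wedge m u J = 0" unfolding wedge_def
      proof (rule sum.neutral, rule ballI)
        fix \<sigma> assume "\<sigma> \<in> {\<sigma>. \<sigma> permutes {..<m}}"
        then have \<sigma>: "\<sigma> permutes {..<m}" by simp
        have srm: "\<sigma> r < m" using permutes_in_image[OF \<sigma>] r by simp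
        have "?L ! (\<sigma> r) \<in> I" using srm lenL setL nth_mem by metis
        then have "u (\<sigma> r) (?M ! r) = 0" using r x by (auto simp: u_def)
        then have "(\<Prod>r<m. u (\<sigma> r) (?M ! r)) = 0" using r by (intro prod_zero) auto
        then show "of_int (sign \<sigma>) * (\<Prod>r<m. u (\<sigma> r) (?M ! r)) = 0" by simp
      qed
      then show ?thesis using False by simp
    qed
  qed
qed

definition decs :: "ereal \<Rightarrow> nat \<Rightarrow> nat \<Rightarrow> nat \<Rightarrow> (nat \<Rightarrow> nat set \<Rightarrow> real) \<Rightarrow> real set" where
  "decs p k d m v = {(\<Sum>j<l. lpnorm p k (z j) * mnorm d m (\<tau> j)) | (l::nat) z \<tau>.
           (\<forall>j<l. simple_mvec d m (\<tau> j)) \<and>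
           (\<forall>i<k. \<forall>I\<in>Idx d m. v i I = (\<Sum>j<l. z j i * \<tau> j I))}"

definition NN :: "ereal \<Rightarrow> nat \<Rightarrow> nat \<Rightarrow> nat \<Rightarrow> (nat \<Rightarrow> nat set \<Rightarrow> real) \<Rightarrow> real" where
  "NN p k d m v = Inf (decs p k d m v)"

lemma decsI:
  assumes "\<forall>j<(l::nat). simple_mvec d m (\<tau> j)" "\<forall>i<k. \<forall>I\<in>Idx d m. v i I = (\<Sum>j<l. z j i * \<tau> j I)"
  shows "(\<Sum>j<l. lpnorm p k (z j) * mnorm d m (\<tau> j)) \<in> decs p k d m v"
  unfolding decs_def
  by (rule CollectI, rule exI[of _ l], rule exI[of _ z], rule exI[of _ \<tau>]) (use assms in simp)

lemma decsE:
  assumes "a \<in> decs p k d m v"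
  obtains l z \<tau> where "a = (\<Sum>j<(l::nat). lpnorm p k (z j) * mnorm d m (\<tau> j))"
    "\<forall>j<l. simple_mvec d m (\<tau> j)" "\<forall>i<k. \<forall>I\<in>Idx d m. v i I = (\<Sum>j<l. z j i * \<tau> j I)"
  by (insert assms, unfold decs_def mem_Collect_eq, elim exE conjE, rule that, assumption+)

lemma decs_nonneg: "0 < k \<Longrightarrow> a \<in> decs p k d m v \<Longrightarrow> 0 \<le> a"
  by (erule decsE) (auto intro!: sum_nonneg mult_nonneg_nonneg lp_nonneg mnorm_nonneg)

lemma decs_ne: "decs p k d m v \<noteq> {}"
proof -
  define S where "S = {..<k} \<times> Idx d m"
  have finS: "finite S" by (simp add: S_def finite_Idx)
  obtain h where h: "bij_betw h {0..<card S} S" using ex_bij_betw_nat_finite[OF finS] by blast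
  define z where "z j i = (if i = fst (h j) then v (fst (h j)) (snd (h j)) else 0)" for j i
  define \<tau> where "\<tau> j J = (if J = snd (h j) then 1 else 0 :: real)" for j J
  have "(\<Sum>j<card S. lpnorm p k (z j) * mnorm d m (\<tau> j)) \<in> decs p k d m v"
  proof (rule decsI)
    show "\<forall>j<card S. simple_mvec d m (\<tau> j)"
    proof (intro allI impI)
      fix j assume "j < card S"
      then have "h j \<in> S" using h by (auto simp: bij_betw_def)
      then have "snd (h j) \<in> Idx d m" by (auto simp: S_def)
      then show "simple_mvec d m (\<tau> j)" unfolding \<tau>_def by (rule simple_basis)
    qed
    show "\<forall>i<k. \<forall>I\<in>Idx d m. v i I = (\<Sum>j<card S. z j i * \<tau> j I)"
    proof (intro allI impI ballI)
      fix i I assume i: "i < k" and I: "I \<in> Idx d m"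
      define g where "g pr = (if pr = (i, I) then v i I else 0)" for pr
      have "(\<Sum>j<card S. z j i * \<tau> j I) = (\<Sum>j\<in>{0..<card S}. g (h j))"
        unfolding atLeast0LessThan
        by (rule sum.cong) (auto simp: z_def \<tau>_def g_def prod_eq_iff)
      also have "\<dots> = sum g S" by (rule sum.reindex_bij_betw[OF h])
      also have "\<dots> = v i I" using i I finS by (simp add: g_def S_def sum.delta')
      finally show "v i I = (\<Sum>j<card S. z j i * \<tau> j I)" by simp
    qed
  qed
  then show ?thesis by blast
qed

lemma decs_bdd: "0 < k \<Longrightarrow> bdd_below (decs p k d m v)"
  using decs_nonneg unfolding bdd_below_def by blast

lemma NN_le: "0 < k \<Longrightarrow> a \<in> decs p k d m v \<Longrightarrow> NN p k d m v \<le> a"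
  unfolding NN_def by (rule cInf_lower) (simp_all add: decs_bdd)

lemma NN_ge: "(\<And>a. a \<in> decs p k d m v \<Longrightarrow> c \<le> a) \<Longrightarrow> c \<le> NN p k d m v"
  unfolding NN_def by (rule cInf_greatest[OF decs_ne])

lemma NN_nonneg: "0 < k \<Longrightarrow> 0 \<le> NN p k d m v"
  by (rule NN_ge) (rule decs_nonneg)

lemma decs_sub:
  assumes xy: "\<And>i I. i < k \<Longrightarrow> I \<in> Idx d m \<Longrightarrow> x i I = y i I"
  shows "decs p k d m x \<subseteq> decs p k d m y"
proof
  fix a assume "a \<in> decs p k d m x"
  then obtain l :: nat and z \<tau> where 1: "a = (\<Sum>j<l. lpnorm p k (z j) * mnorm d m (\<tau> j))"
    "\<forall>j<l. simple_mvec d m (\<tau> j)" "\<forall>i<k. \<forall>I\<in>Idx d m. x i I = (\<Sum>j<l. z j i * \<tau> j I)"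
    by (rule decsE) blast
  have "\<forall>i<k. \<forall>I\<in>Idx d m. y i I = (\<Sum>j<l. z j i * \<tau> j I)"
  proof (intro allI impI ballI)
    fix i I assume i: "i < k" and I: "I \<in> Idx d m"
    then show "y i I = (\<Sum>j<l. z j i * \<tau> j I)" using 1(3) xy[OF i I] by simp
  qed
  from decsI[OF 1(2) this] show "a \<in> decs p k d m y" unfolding 1(1) .
qed

lemma decs_cong: "(\<And>i I. i < k \<Longrightarrow> I \<in> Idx d m \<Longrightarrow> x i I = y i I) \<Longrightarrow> decs p k d m x = decs p k d m y"
proof -
  assume h: "\<And>i I. i < k \<Longrightarrow> I \<in> Idx d m \<Longrightarrow> x i I = y i I"
  have h2: "\<And>i I. i < k \<Longrightarrow> I \<in> Idx d m \<Longrightarrow> y i I = x i I" using h by metis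
  show ?thesis by (rule equalityI[OF decs_sub[OF h] decs_sub[OF h2]])
qed

lemma NN_cong: "(\<And>i I. i < k \<Longrightarrow> I \<in> Idx d m \<Longrightarrow> x i I = y i I) \<Longrightarrow> NN p k d m x = NN p k d m y"
proof -
  assume h: "\<And>i I. i < k \<Longrightarrow> I \<in> Idx d m \<Longrightarrow> x i I = y i I"
  have "decs p k d m x = decs p k d m y" by (rule decs_cong[OF h])
  then show ?thesis unfolding NN_def by simp
qed

lemma NN_zero_on: "0 < k \<Longrightarrow> (\<And>i I. i < k \<Longrightarrow> I \<in> Idx d m \<Longrightarrow> x i I = 0) \<Longrightarrow> NN p k d m x = 0"
proof -
  assume k: "0 < k" and x: "\<And>i I. i < k \<Longrightarrow> I \<in> Idx d m \<Longrightarrow> x i I = 0"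
  have "(\<Sum>j<(0::nat). lpnorm p k (z0 j) * mnorm d m (\<tau>0 j)) \<in> decs p k d m x" for z0 \<tau>0
    by (rule decsI) (simp_all add: x)
  then have "0 \<in> decs p k d m x" by simp
  then have "NN p k d m x \<le> 0" by (rule NN_le[OF k])
  then show ?thesis using NN_nonneg[OF k, of p d m x] by simp
qed

lemma decs_add:
  assumes a: "a \<in> decs p k d m x" and b: "b \<in> decs p k d m y"
  shows "a + b \<in> decs p k d m (x + y)"
proof -
  obtain l1 :: nat and z1 \<tau>1 where 1: "a = (\<Sum>j<l1. lpnorm p k (z1 j) * mnorm d m (\<tau>1 j))"
    "\<forall>j<l1. simple_mvec d m (\<tau>1 j)" "\<forall>i<k. \<forall>I\<in>Idx d m. x i I = (\<Sum>j<l1. z1 j i * \<tau>1 j I)"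
    using a by (rule decsE)
  obtain l2 :: nat and z2 \<tau>2 where 2: "b = (\<Sum>j<l2. lpnorm p k (z2 j) * mnorm d m (\<tau>2 j))"
    "\<forall>j<l2. simple_mvec d m (\<tau>2 j)" "\<forall>i<k. \<forall>I\<in>Idx d m. y i I = (\<Sum>j<l2. z2 j i * \<tau>2 j I)"
    using b by (rule decsE)
  define z where "z j = (if j < l1 then z1 j else z2 (j - l1))" for j
  define \<tau> where "\<tau> j = (if j < l1 then \<tau>1 j else \<tau>2 (j - l1))" for j
  have "(\<Sum>j<l1 + l2. lpnorm p k (z j) * mnorm d m (\<tau> j)) \<in> decs p k d m (x + y)"
  proof (rule decsI)
    show "\<forall>j<l1 + l2. simple_mvec d m (\<tau> j)"
      using 1(2) 2(2) by (auto simp: \<tau>_def)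
    show "\<forall>i<k. \<forall>I\<in>Idx d m. (x + y) i I = (\<Sum>j<l1 + l2. z j i * \<tau> j I)"
      using 1(3) 2(3) by (simp add: sum_concat z_def \<tau>_def)
  qed
  also have "(\<Sum>j<l1 + l2. lpnorm p k (z j) * mnorm d m (\<tau> j)) = a + b"
    using 1(1) 2(1) by (simp add: sum_concat z_def \<tau>_def)
  finally show ?thesis .
qed

lemma NN_add: "0 < k \<Longrightarrow> NN p k d m (x + y) \<le> NN p k d m x + NN p k d m y"
proof -
  assume k: "0 < k"
  have "NN p k d m (x + y) - b \<le> NN p k d m x" if b: "b \<in> decs p k d m y" for b
  proof -
    have "NN p k d m (x + y) - b \<le> a" if a: "a \<in> decs p k d m x" for a
      using NN_le[OF k decs_add[OF a b]] by simp
    then show ?thesis by (intro NN_ge) auto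
  qed
  then have "NN p k d m (x + y) - NN p k d m x \<le> NN p k d m y"
    by (intro NN_ge) (simp add: algebra_simps)
  then show ?thesis by simp
qed

lemma decs_scale:
  assumes m: "1 \<le> m" and c: "0 < c" and a: "a \<in> decs p k d m x"
  shows "c * a \<in> decs p k d m (c *\<^sub>R x)"
proof -
  obtain l :: nat and z \<tau> where 1: "a = (\<Sum>j<l. lpnorm p k (z j) * mnorm d m (\<tau> j))"
    "\<forall>j<l. simple_mvec d m (\<tau> j)" "\<forall>i<k. \<forall>I\<in>Idx d m. x i I = (\<Sum>j<l. z j i * \<tau> j I)"
    using a by (rule decsE)
  have "(\<Sum>j<l. lpnorm p k (z j) * mnorm d m (\<lambda>I. c * \<tau> j I)) \<in> decs p k d m (c *\<^sub>R x)"
  proof (rule decsI)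
    show "\<forall>j<l. simple_mvec d m (\<lambda>I. c * \<tau> j I)" using 1(2) simple_scale[OF m] by blast
    show "\<forall>i<k. \<forall>I\<in>Idx d m. (c *\<^sub>R x) i I = (\<Sum>j<l. z j i * (c * \<tau> j I))"
      using 1(3) by (simp add: sum_distrib_left algebra_simps)
  qed
  also have "(\<Sum>j<l. lpnorm p k (z j) * mnorm d m (\<lambda>I. c * \<tau> j I)) = c * a"
    using 1(1) c by (simp add: mnorm_scale sum_distrib_left algebra_simps)
  finally show ?thesis .
qed

lemma NN_scale_le: "0 < k \<Longrightarrow> 1 \<le> m \<Longrightarrow> 0 < c \<Longrightarrow> NN p k d m (c *\<^sub>R x) \<le> c * NN p k d m x"
proof -
  assume k: "0 < k" and m: "1 \<le> m" and c: "0 < c"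
  have "NN p k d m (c *\<^sub>R x) / c \<le> a" if a: "a \<in> decs p k d m x" for a
    using NN_le[OF k decs_scale[OF m c a]] c by (simp add: divide_le_eq mult.commute)
  then have "NN p k d m (c *\<^sub>R x) / c \<le> NN p k d m x" by (intro NN_ge) auto
  then show ?thesis using c by (simp add: divide_le_eq mult.commute)
qed

lemma NN_sublin: "0 < k \<Longrightarrow> 1 \<le> m \<Longrightarrow> sublin (NN p k d m)"
  unfolding sublin_def
proof (intro conjI allI impI)
  assume k: "0 < k" and m: "1 \<le> m"
  fix x y show "NN p k d m (x + y) \<le> NN p k d m x + NN p k d m y" by (rule NN_add[OF k])
next
  assume k: "0 < k" and m: "1 \<le> m"
  fix c :: real and x assume c: "0 \<le> c"
  show "NN p k d m (c *\<^sub>R x) = c * NN p k d m x"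
  proof (cases "c = 0")
    case True
    then show ?thesis using NN_zero_on[OF k, of d m "c *\<^sub>R x"] by simp
  next
    case False
    then have cp: "0 < c" using c by simp
    have "NN p k d m x = NN p k d m ((1/c) *\<^sub>R (c *\<^sub>R x))" using cp by simp
    also have "\<dots> \<le> (1/c) * NN p k d m (c *\<^sub>R x)" using NN_scale_le[OF k m, of "1/c" p d "c *\<^sub>R x"] cp by simp
    finally have "c * NN p k d m x \<le> NN p k d m (c *\<^sub>R x)" using cp by (simp add: field_simps)
    then show ?thesis using NN_scale_le[OF k m cp, of p d x] by linarith
  qed
qed

lemma NN_simple:
  assumes k: "0 < k" and s: "simple_mvec d m \<tau>"
  shows "NN p k d m (\<lambda>i I. z i * \<tau> I) \<le> lpnorm p k z * mnorm d m \<tau>"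
proof -
  have "lpnorm p k z * mnorm d m \<tau> \<in> decs p k d m (\<lambda>i I. z i * \<tau> I)"
    using decsI[where l=1 and z="\<lambda>_. z" and \<tau>="\<lambda>_. \<tau>" and p=p and k=k and d=d and m=m
        and v="\<lambda>i I. z i * \<tau> I"] s by simp
  then show ?thesis using NN_le[OF k] by simp
qed

lemma sum_fun_apply: "(sum f A) x = sum (\<lambda>a. f a x) A"
  for f :: "'a \<Rightarrow> 'b \<Rightarrow> 'c::comm_monoid_add"
  by (induction A rule: infinite_finite_induct) simp_all

lemma lin_zero: "lin_on UNIV g \<Longrightarrow> g 0 = 0"
  unfolding lin_on_def by (metis scaleR_zero_left mult_zero_left UNIV_I)

lemma lin_sum: "lin_on UNIV g \<Longrightarrow> g (sum f A) = (\<Sum>a\<in>A. g (f a))"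
proof (induction A rule: infinite_finite_induct)
  case (infinite A) then show ?case by (simp add: lin_zero)
next
  case empty then show ?case by (simp add: lin_zero)
next
  case (insert a A)
  then show ?case by (simp add: lin_on_def)
qed

lemma lin_scale: "lin_on UNIV g \<Longrightarrow> g (c *\<^sub>R x) = c * g x"
  unfolding lin_on_def by simp

definition ee :: "nat \<Rightarrow> nat set \<Rightarrow> nat \<Rightarrow> nat set \<Rightarrow> real" where
  "ee i I = (\<lambda>i' I'. if i' = i \<and> I' = I then 1 else 0)"

definition proj :: "nat \<Rightarrow> nat \<Rightarrow> nat \<Rightarrow> (nat \<Rightarrow> nat set \<Rightarrow> real) \<Rightarrow> (nat \<Rightarrow> nat set \<Rightarrow> real)" where
  "proj k d m x = (\<Sum>i<k. \<Sum>I\<in>Idx d m. x i I *\<^sub>R ee i I)"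

lemma proj_apply: "i < k \<Longrightarrow> I \<in> Idx d m \<Longrightarrow> proj k d m x i I = x i I"
proof -
  assume i: "i < k" and I: "I \<in> Idx d m"
  have "proj k d m x i I = (\<Sum>i'<k. \<Sum>I'\<in>Idx d m. x i' I' * (if i = i' \<and> I = I' then 1 else 0))"
    unfolding proj_def by (simp add: sum_fun_apply ee_def)
  also have "\<dots> = (\<Sum>i'<k. if i' = i then x i I else 0)"
  proof (rule sum.cong[OF refl])
    fix i' assume "i' \<in> {..<k}"
    show "(\<Sum>I'\<in>Idx d m. x i' I' * (if i = i' \<and> I = I' then 1 else 0)) = (if i' = i then x i I else 0)"
    proof (cases "i' = i")
      case True
      have "(\<Sum>I'\<in>Idx d m. x i' I' * (if i = i' \<and> I = I' then 1 else 0)) = (\<Sum>I'\<in>Idx d m. if I' = I then x i I else 0)"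
        using True by (intro sum.cong) auto
      also have "\<dots> = x i I" using I finite_Idx by (simp add: sum.delta')
      finally show ?thesis using True by simp
    qed auto
  qed
  also have "\<dots> = x i I" using i by (simp add: sum.delta')
  finally show ?thesis .
qed

lemma lin_repr:
  assumes g: "lin_on UNIV g" and gZ: "\<And>z. (\<forall>i<k. \<forall>I\<in>Idx d m. z i I = 0) \<Longrightarrow> g z = 0"
  shows "g x = (\<Sum>i<k. \<Sum>I\<in>Idx d m. g (ee i I) * x i I)"
proof -
  have "g (x - proj k d m x) = 0" by (rule gZ) (simp add: proj_apply)
  moreover have "x = proj k d m x + (x - proj k d m x)" by simp
  ultimately have "g x = g (proj k d m x)" using g unfolding lin_on_def by (metis add.right_neutral UNIV_I)
  also have "\<dots> = (\<Sum>i<k. \<Sum>I\<in>Idx d m. g (ee i I) * x i I)"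
    unfolding proj_def by (simp add: lin_sum[OF g] lin_scale[OF g] mult.commute)
  finally show ?thesis .
qed

lemma com_bdd:
  assumes p: "1 \<le> p" and k: "0 < k"
  shows "bdd_above {lpnorm (conj_exp p) k (\<lambda>i. \<Sum>I\<in>Idx d m. w i I * \<tau> I) | \<tau>.
      simple_mvec d m \<tau> \<and> mnorm d m \<tau> \<le> 1}"
proof -
  define Bd where "Bd = (\<Sum>i<k. \<Sum>I\<in>Idx d m. \<bar>w i I\<bar>)"
  have "lpnorm (conj_exp p) k (\<lambda>i. \<Sum>I\<in>Idx d m. w i I * \<tau> I) \<le> real k * Bd"
    if "mnorm d m \<tau> \<le> 1" for \<tau>
  proof (rule lp_bound[OF conj_cases[OF p] k])
    fix i assume i: "i < k"
    have "\<bar>\<Sum>I\<in>Idx d m. w i I * \<tau> I\<bar> \<le> (\<Sum>I\<in>Idx d m. \<bar>w i I * \<tau> I\<bar>)" by (rule sum_abs)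
    also have "\<dots> \<le> (\<Sum>I\<in>Idx d m. \<bar>w i I\<bar>)"
    proof (rule sum_mono)
      fix I assume I: "I \<in> Idx d m"
      have "\<bar>\<tau> I\<bar> \<le> 1" using mnorm_ge[OF I, of \<tau>] that by linarith
      then show "\<bar>w i I * \<tau> I\<bar> \<le> \<bar>w i I\<bar>"
        by (simp add: abs_mult mult_left_le)
    qed
    also have "\<dots> \<le> Bd" unfolding Bd_def
      using i by (intro member_le_sum) (auto intro: sum_nonneg)
    finally show "\<bar>\<Sum>I\<in>Idx d m. w i I * \<tau> I\<bar> \<le> Bd" .
  qed
  then show ?thesis unfolding bdd_above_def by blast
qed

lemma com_elem:
  assumes p: "1 \<le> p" and k: "0 < k" and c: "com_norm p k d m w \<le> 1"
    and s: "simple_mvec d m \<tau>" and n: "mnorm d m \<tau> \<le> 1"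
  shows "lpnorm (conj_exp p) k (\<lambda>i. \<Sum>I\<in>Idx d m. w i I * \<tau> I) \<le> 1"
proof -
  have "lpnorm (conj_exp p) k (\<lambda>i. \<Sum>I\<in>Idx d m. w i I * \<tau> I) \<le> com_norm p k d m w"
    unfolding com_norm_def by (rule cSup_upper[OF _ com_bdd[OF p k]]) (use s n in blast)
  then show ?thesis using c by linarith
qed

lemma term_bound:
  assumes p: "1 \<le> p" and k: "0 < k" and m: "1 \<le> m" and c: "com_norm p k d m w \<le> 1"
    and s: "simple_mvec d m \<tau>"
  shows "(\<Sum>i<k. z i * (\<Sum>I\<in>Idx d m. w i I * \<tau> I)) \<le> lpnorm p k z * mnorm d m \<tau>"
proof (cases "mnorm d m \<tau> = 0")
  case True
  then have "\<tau> I = 0" if "I \<in> Idx d m" for I using mnorm_ge[OF that, of \<tau>] by simp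
  then show ?thesis using True by simp
next
  case False
  define \<mu> where "\<mu> = mnorm d m \<tau>"
  have mu: "\<mu> > 0" using False mnorm_nonneg[of d m \<tau>] by (simp add: \<mu>_def)
  define \<tau>' where "\<tau>' I = (1 / \<mu>) * \<tau> I" for I
  have s': "simple_mvec d m \<tau>'" unfolding \<tau>'_def by (rule simple_scale[OF m s])
  have "mnorm d m \<tau>' = \<bar>1 / \<mu>\<bar> * mnorm d m \<tau>" unfolding \<tau>'_def by (rule mnorm_scale)
  then have n': "mnorm d m \<tau>' \<le> 1" using mu by (simp add: \<mu>_def)
  have "(\<Sum>i<k. z i * (\<Sum>I\<in>Idx d m. w i I * \<tau> I)) = \<mu> * (\<Sum>i<k. z i * (\<Sum>I\<in>Idx d m. w i I * \<tau>' I))"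
    using mu by (simp add: \<tau>'_def sum_distrib_left algebra_simps)
  also have "\<dots> \<le> \<mu> * (lpnorm p k z * lpnorm (conj_exp p) k (\<lambda>i. \<Sum>I\<in>Idx d m. w i I * \<tau>' I))"
    using mu holder[OF p k] by (simp add: mult_left_mono)
  also have "\<dots> \<le> \<mu> * (lpnorm p k z * 1)"
    using mu com_elem[OF p k c s' n'] lp_nonneg[OF k, of p z]
    by (intro mult_left_mono) (simp_all add: mult_left_le)
  finally show ?thesis by (simp add: \<mu>_def mult.commute)
qed

lemma mass_upper:
  assumes p: "1 \<le> p" and k: "0 < k" and m: "1 \<le> m" and c: "com_norm p k d m w \<le> 1"
  shows "pairing k d m w v \<le> NN p k d m v"
proof (rule NN_ge)
  fix a assume "a \<in> decs p k d m v"
  then obtain l :: nat and z \<tau> where 1: "a = (\<Sum>j<l. lpnorm p k (z j) * mnorm d m (\<tau> j))"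
    "\<forall>j<l. simple_mvec d m (\<tau> j)" "\<forall>i<k. \<forall>I\<in>Idx d m. v i I = (\<Sum>j<l. z j i * \<tau> j I)"
    by (rule decsE) blast
  have "pairing k d m w v = (\<Sum>i<k. \<Sum>I\<in>Idx d m. w i I * (\<Sum>j<l. z j i * \<tau> j I))"
    unfolding pairing_def using 1(3) by simp
  also have "\<dots> = (\<Sum>i<k. \<Sum>I\<in>Idx d m. \<Sum>j<l. z j i * (w i I * \<tau> j I))"
    by (simp add: sum_distrib_left algebra_simps)
  also have "\<dots> = (\<Sum>i<k. \<Sum>j<l. \<Sum>I\<in>Idx d m. z j i * (w i I * \<tau> j I))"
    by (rule sum.cong[OF refl], rule sum.swap)
  also have "\<dots> = (\<Sum>j<l. \<Sum>i<k. \<Sum>I\<in>Idx d m. z j i * (w i I * \<tau> j I))"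
    by (rule sum.swap)
  also have "\<dots> = (\<Sum>j<l. \<Sum>i<k. z j i * (\<Sum>I\<in>Idx d m. w i I * \<tau> j I))"
    by (simp add: sum_distrib_left)
  also have "\<dots> \<le> (\<Sum>j<l. lpnorm p k (z j) * mnorm d m (\<tau> j))"
    using 1(2) by (intro sum_mono term_bound[OF p k m c]) auto
  finally show "pairing k d m w v \<le> a" using 1(1) by simp
qed

definition ZZ :: "nat \<Rightarrow> nat \<Rightarrow> nat \<Rightarrow> (nat \<Rightarrow> nat set \<Rightarrow> real) set" where
  "ZZ k d m = {x. \<forall>i<k. \<forall>I\<in>Idx d m. x i I = 0}"

lemma subspace_ZZ: "subspace (ZZ k d m)"
  unfolding subspace_def ZZ_def by simp

lemma subspace_U0:
  fixes U :: "'a::real_vector set"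
  assumes "subspace U"
  shows "subspace {u + t *\<^sub>R y |u t. u \<in> U}"
  unfolding subspace_def
proof (intro conjI ballI allI)
  have "(0::'a) = 0 + 0 *\<^sub>R y \<and> (0::'a) \<in> U" using subspace_0[OF assms] by simp
  then show "0 \<in> {u + t *\<^sub>R y |u t. u \<in> U}" by blast
next
  fix x z assume "x \<in> {u + t *\<^sub>R y |u t. u \<in> U}" "z \<in> {u + t *\<^sub>R y |u t. u \<in> U}"
  then obtain u1 t1 u2 t2 where h: "u1 \<in> U" "u2 \<in> U" "x = u1 + t1 *\<^sub>R y" "z = u2 + t2 *\<^sub>R y" by blast
  then have "x + z = (u1 + u2) + (t1 + t2) *\<^sub>R y" by (simp add: algebra_simps)
  moreover have "u1 + u2 \<in> U" using subspace_add[OF assms h(1,2)] .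
  ultimately show "x + z \<in> {u + t *\<^sub>R y |u t. u \<in> U}" by blast
next
  fix c x assume "x \<in> {u + t *\<^sub>R y |u t. u \<in> U}"
  then obtain u1 t1 where h: "u1 \<in> U" "x = u1 + t1 *\<^sub>R y" by blast
  then have "c *\<^sub>R x = c *\<^sub>R u1 + (c * t1) *\<^sub>R y" by (simp add: algebra_simps)
  moreover have "c *\<^sub>R u1 \<in> U" using subspace_scale[OF assms h(1)] .
  ultimately show "c *\<^sub>R x \<in> {u + t *\<^sub>R y |u t. u \<in> U}" by blast
qed

lemma memW: "u \<in> U \<Longrightarrow> s \<in> S \<Longrightarrow> u + s \<in> {u + s |u s. u \<in> U \<and> s \<in> S}"
  by blast

lemma memU0: "u \<in> U \<Longrightarrow> u + t *\<^sub>R y \<in> {u + t *\<^sub>R y |u t. u \<in> U}"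
  by blast

lemma exists_g:
  assumes k: "0 < k" and m: "1 \<le> m"
  shows "\<exists>g. lin_on UNIV g \<and> (\<forall>x. g x \<le> NN p k d m x) \<and> g v = NN p k d m v
     \<and> (\<forall>z\<in>ZZ k d m. g z = 0)"
proof (cases "v \<in> ZZ k d m")
  case True
  have "NN p k d m v = 0" using True by (intro NN_zero_on[OF k]) (auto simp: ZZ_def)
  then show ?thesis using NN_nonneg[OF k]
    by (intro exI[of _ "\<lambda>_. 0"]) (simp add: lin_on_def)
next
  case False
  let ?N = "NN p k d m"
  have sl: "sublin ?N" by (rule NN_sublin[OF k m])
  have Nhom: "?N (c *\<^sub>R x) = c * ?N x" if "0 \<le> c" for c x using sl that by (simp add: sublin_def)
  have Nadd: "?N (x + y) \<le> ?N x + ?N y" for x y using sl by (simp add: sublin_def)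
  have N0: "?N 0 = 0" by (rule NN_zero_on[OF k]) simp
  have lin0: "lin_on (ZZ k d m) (\<lambda>_. 0)" by (simp add: lin_on_def)
  have cond: "(\<lambda>_. 0) u + t * ?N v \<le> ?N (u + t *\<^sub>R v)" if u: "u \<in> ZZ k d m" for u t
  proof -
    have "?N (u + t *\<^sub>R v) = ?N (t *\<^sub>R v)" using u by (intro NN_cong) (simp add: ZZ_def)
    moreover have "t * ?N v \<le> ?N (t *\<^sub>R v)"
    proof (cases "t \<ge> 0")
      case True then show ?thesis using Nhom by simp
    next
      case False
      have "0 = ?N (v + - v)" using N0 by simp
      also have "\<dots> \<le> ?N v + ?N (- v)" by (rule Nadd)
      finally have nv: "- ?N v \<le> ?N (- v)" by simp
      have "t *\<^sub>R v = (- t) *\<^sub>R (- v)" by simp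
      then have "?N (t *\<^sub>R v) = (- t) * ?N (- v)" using Nhom[of "- t" "- v"] False by simp
      moreover have "t * ?N v \<le> (- t) * ?N (- v)"
        using mult_left_mono[OF nv, of "- t"] False by simp
      ultimately show ?thesis by simp
    qed
    ultimately show ?thesis by simp
  qed
  obtain g0 where g0: "\<forall>u\<in>ZZ k d m. g0 u = 0" "g0 v = ?N v"
    "lin_on {u + t *\<^sub>R v |u t. u \<in> ZZ k d m} g0"
    "\<forall>x\<in>{u + t *\<^sub>R v |u t. u \<in> ZZ k d m}. g0 x \<le> ?N x"
    using hb_ext[where U="ZZ k d m" and f="\<lambda>_. 0" and y=v and c="?N v" and q="?N",
        OF subspace_ZZ lin0 False cond] by auto
  let ?U0 = "{u + t *\<^sub>R v |u t. u \<in> ZZ k d m}"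
  define E where "E = (\<lambda>(i, I). ee i I) ` ({..<k} \<times> Idx d m)"
  have finE: "finite E" unfolding E_def by (simp add: finite_Idx)
  have g0le: "\<And>u. u \<in> ?U0 \<Longrightarrow> g0 u \<le> ?N u" using g0(4) by blast
  obtain g where g: "\<forall>u\<in>?U0. g u = g0 u" "lin_on {u + s |u s. u \<in> ?U0 \<and> s \<in> span E} g"
    "\<forall>x\<in>{u + s |u s. u \<in> ?U0 \<and> s \<in> span E}. g x \<le> ?N x"
    using hb_fin[OF sl subspace_U0[OF subspace_ZZ] g0(3) g0le finE] by blast
  have ZU: "z \<in> ?U0" if "z \<in> ZZ k d m" for z
  proof -
    have "z = z + 0 *\<^sub>R v" by simp
    also have "\<dots> \<in> ?U0" by (rule memU0[OF that])
    finally show ?thesis .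
  qed
  have W: "x \<in> {u + s |u s. u \<in> ?U0 \<and> s \<in> span E}" for x
  proof -
    have "x - proj k d m x \<in> ZZ k d m" by (simp add: ZZ_def proj_apply)
    then have a: "x - proj k d m x \<in> ?U0" by (rule ZU)
    have b: "proj k d m x \<in> span E" unfolding proj_def
    proof (intro span_sum span_scale)
      fix i I assume "i \<in> {..<k}" "I \<in> Idx d m"
      then have "ee i I \<in> E" unfolding E_def by force
      then show "ee i I \<in> span E" by (rule span_base)
    qed
    have "x = (x - proj k d m x) + proj k d m x" by simp
    also have "\<dots> \<in> {u + s |u s. u \<in> ?U0 \<and> s \<in> span E}" by (rule memW[OF a b])
    finally show ?thesis .
  qed
  show ?thesis
  proof (intro exI[of _ g] conjI allI ballI)
    show "lin_on UNIV g" by (rule lin_on_mono[OF g(2)]) (rule subsetI, rule W)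
    show "g x \<le> ?N x" for x by (rule bspec[OF g(3) W])
    show "g v = ?N v"
    proof -
      have "v = 0 + 1 *\<^sub>R v" by simp
      also have "\<dots> \<in> ?U0" by (rule memU0) (simp add: ZZ_def)
      finally have "v \<in> ?U0" .
      then show ?thesis using g(1) g0(2) by simp
    qed
    show "g z = 0" if "z \<in> ZZ k d m" for z
      using bspec[OF g(1) ZU[OF that]] bspec[OF g0(1) that] by simp
  qed
qed

theorem lemmaA2:
  fixes k d m :: nat and p :: ereal and v :: "nat \<Rightarrow> nat set \<Rightarrow> real"
  assumes "1 \<le> k" and "1 \<le> m" and "m \<le> d" and "1 \<le> p"
  shows "mass_norm p k d m v =
    Inf {(\<Sum>j<l. lpnorm p k (z j) * mnorm d m (\<tau> j)) | (l::nat) z \<tau>.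
           (\<forall>j<l. simple_mvec d m (\<tau> j)) \<and>
           (\<forall>i<k. \<forall>I\<in>Idx d m. v i I = (\<Sum>j<l. z j i * \<tau> j I))}"
proof -
  have k: "0 < k" using assms(1) by simp
  have m: "1 \<le> m" by (rule assms(2))
  have p: "1 \<le> p" by (rule assms(4))
  have I0: "{..<m} \<in> Idx d m" using assms(3) by (auto simp: Idx_def)
  obtain g where g: "lin_on UNIV g" "\<forall>x. g x \<le> NN p k d m x" "g v = NN p k d m v"
    "\<forall>z\<in>ZZ k d m. g z = 0"
    using exists_g[OF k m, of p d v] by blast
  define w where "w i I = g (ee i I)" for i I
  have gZ: "g z = 0" if "\<forall>i<k. \<forall>I\<in>Idx d m. z i I = 0" for z
    using g(4) that by (simp add: ZZ_def)
  have repr: "g x = (\<Sum>i<k. \<Sum>I\<in>Idx d m. w i I * x i I)" for x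
    unfolding w_def by (rule lin_repr[OF g(1)]) (rule gZ)
  have cw: "com_norm p k d m w \<le> 1"
    unfolding com_norm_def
  proof (rule cSup_least)
    let ?\<tau>0 = "\<lambda>I. 0 * (if I = {..<m} then 1 else 0)"
    have "simple_mvec d m ?\<tau>0" by (rule simple_scale[OF m simple_basis[OF I0]])
    moreover have "mnorm d m ?\<tau>0 \<le> 1" unfolding mnorm_scale by simp
    ultimately show "{lpnorm (conj_exp p) k (\<lambda>i. \<Sum>I\<in>Idx d m. w i I * \<tau> I) |\<tau>.
        simple_mvec d m \<tau> \<and> mnorm d m \<tau> \<le> 1} \<noteq> {}" by blast
  next
    fix a assume "a \<in> {lpnorm (conj_exp p) k (\<lambda>i. \<Sum>I\<in>Idx d m. w i I * \<tau> I) |\<tau>.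
        simple_mvec d m \<tau> \<and> mnorm d m \<tau> \<le> 1}"
    then obtain \<tau> where a: "a = lpnorm (conj_exp p) k (\<lambda>i. \<Sum>I\<in>Idx d m. w i I * \<tau> I)"
      and s: "simple_mvec d m \<tau>" and n: "mnorm d m \<tau> \<le> 1" by blast
    have "lpnorm (conj_exp p) k (\<lambda>i. \<Sum>I\<in>Idx d m. w i I * \<tau> I) \<le> 1"
    proof (rule dual_attain[OF p k])
      fix z :: "nat \<Rightarrow> real"
      have "(\<Sum>i<k. z i * (\<Sum>I\<in>Idx d m. w i I * \<tau> I)) = g (\<lambda>i I. z i * \<tau> I)"
        unfolding repr by (simp add: sum_distrib_left algebra_simps)
      also have "\<dots> \<le> NN p k d m (\<lambda>i I. z i * \<tau> I)" using g(2) by blast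
      also have "\<dots> \<le> lpnorm p k z * mnorm d m \<tau>" by (rule NN_simple[OF k s])
      also have "\<dots> \<le> lpnorm p k z" using n lp_nonneg[OF k, of p z] mnorm_nonneg[of d m \<tau>]
        by (simp add: mult_left_le)
      finally show "(\<Sum>i<k. z i * (\<Sum>I\<in>Idx d m. w i I * \<tau> I)) \<le> lpnorm p k z" .
    qed
    then show "a \<le> 1" using a by simp
  qed
  have pw: "pairing k d m w v = NN p k d m v"
    using g(3) repr[of v] by (simp add: pairing_def)
  have "mass_norm p k d m v = NN p k d m v"
    unfolding mass_norm_def
  proof (rule cSup_eq_maximum)
    show "NN p k d m v \<in> {pairing k d m w v |w. com_norm p k d m w \<le> 1}"
      using pw cw by (metis (mono_tags, lifting) mem_Collect_eq)
  next
    fix x assume "x \<in> {pairing k d m w v |w. com_norm p k d m w \<le> 1}"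
    then obtain w' where "x = pairing k d m w' v" "com_norm p k d m w' \<le> 1" by blast
    then show "x \<le> NN p k d m v" using mass_upper[OF p k m] by simp
  qed
  then show ?thesis by (simp add: NN_def decs_def)
qed

end
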